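(* Let $\mathbb{F}$ be a field, $d\geq3$ and $V$ a vector space over $\mathbb{F}$ of dimension $d+1$. Let $E^*_0,\dots,E^*_d$ be a system of mutually orthogonal idempotents in $\mathrm{End}(V)$ and $A\in\mathrm{End}(V)$ with $E^*_iAE^*_j=0$ if $|i-j|>1$ and $E^*_iAE^*_j\neq0$ if $|i-j|=1$. Assume $A$ is multiplicity-free and bipartite with primitive idempotents $E_0,\dots,E_d$ and eigenvalues $\theta_0,\dots,\theta_d$. Let $\theta^*_0,\dots,\theta^*_d\in\mathbb{F}$ be mutually distinct and $A^*=\sum_i\theta^*_iE^*_i$. Assume $E_0$ is normalizing, $(E_0,E_1)$ is a tail, and $E_2$ is the vertex of $\Delta$ other than $E_0$ adjacent to $E_1$. Then for $1\le i\le d-1$, $$\theta_0(\theta^*_{i+1}-\theta^*_1)(\theta^*_{i-1}-\theta^*_1)+\theta_1(\theta^*_i-\theta^*_0)(\theta^*_{d-1}-\theta^*_{i+1}-\theta^*_{i-1}+\theta^*_1)-\theta_2(\theta^*_i-\theta^*_0)(\theta^*_d-\theta^*_i)=0.$$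
   Context: A system of mutually orthogonal idempotents: $E^*_iE^*_j=\delta_{ij}E^*_i$, $\operatorname{rank}E^*_i=1$. $A$ multiplicity-free: $d+1$ distinct eigenvalues in $\mathbb{F}$; $E_i$ is the projection onto the $\theta_i$-eigenspace along the other eigenspaces. Bipartite: $\operatorname{tr}(E^*_iA)=0$ for all $i$. $\Delta$: graph on $E_0,\dots,E_d$ with $E_i\neq E_j$ adjacent iff $E_iA^*E_j\neq0$. $(E_0,E_1)$ is a tail if $E_0$ is adjacent to no vertex other than $E_1$ and $E_1$ is adjacent to at most one vertex other than $E_0$. The matrix $Y$ representing $A$ w.r.t. a basis $v_0,\dots,v_d$ satisfies $Av_j=\sum_iY_{ij}v_i$. An eigenvalue $\theta$ of $A$ is normalizing if some basis with $v_i\in E^*_iV$ makes every row sum of the matrix representing $A$ equal to $\theta$; $E_i$ is normalizing if $\theta_i$ is. *)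

theory Defs
  imports "Jordan_Normal_Form.Matrix" "Jordan_Normal_Form.Char_Poly" "Jordan_Normal_Form.DL_Rank"
begin

text \<open>Throughout, V = F^(d+1) and End(V) = (d+1) x (d+1) matrices over the field F.
  Indices range over 0..d.\<close>

definition mat_trace :: "'a::comm_ring_1 mat \<Rightarrow> 'a" where
  "mat_trace M = (\<Sum>i<dim_row M. M $$ (i,i))"

definition orth_idem_system :: "nat \<Rightarrow> (nat \<Rightarrow> 'a::field mat) \<Rightarrow> bool" where
  "orth_idem_system d Es \<longleftrightarrow>
     (\<forall>i\<le>d. Es i \<in> carrier_mat (d+1) (d+1) \<and> vec_space.rank (d+1) (Es i) = 1) \<and>
     (\<forall>i\<le>d. \<forall>j\<le>d. Es i * Es j = (if i = j then Es i else 0\<^sub>m (d+1) (d+1)))"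

text \<open>A is multiplicity-free with eigenvalues th 0..th d (mutually distinct, all in F),
  and E i is the projection onto the th i-eigenspace along the other eigenspaces
  (the primitive idempotents): the E i are mutually orthogonal idempotents summing to
  the identity with A E i = th i E i.\<close>
definition primitive_idempotents ::
  "nat \<Rightarrow> 'a::field mat \<Rightarrow> (nat \<Rightarrow> 'a) \<Rightarrow> (nat \<Rightarrow> 'a mat) \<Rightarrow> bool" where
  "primitive_idempotents d A th E \<longleftrightarrow>
     A \<in> carrier_mat (d+1) (d+1) \<and>
     (\<forall>i\<le>d. \<forall>j\<le>d. i \<noteq> j \<longrightarrow> th i \<noteq> th j) \<and>
     (\<forall>i\<le>d. eigenvalue A (th i)) \<and>
     (\<forall>i\<le>d. E i \<in> carrier_mat (d+1) (d+1) \<and> A * E i = th i \<cdot>\<^sub>m E i) \<and>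
     (\<forall>i\<le>d. \<forall>j\<le>d. E i * E j = (if i = j then E i else 0\<^sub>m (d+1) (d+1))) \<and>
     (\<forall>k<d+1. \<forall>l<d+1. (\<Sum>i\<le>d. E i $$ (k,l)) = (if k = l then 1 else 0))"

definition delta_adj :: "(nat \<Rightarrow> 'a::field mat) \<Rightarrow> 'a mat \<Rightarrow> nat \<Rightarrow> nat \<Rightarrow> bool" where
  "delta_adj E As i j \<longleftrightarrow> E i \<noteq> E j \<and> E i * As * E j \<noteq> 0\<^sub>m (dim_row As) (dim_col As)"

definition is_tail :: "nat \<Rightarrow> (nat \<Rightarrow> 'a::field mat) \<Rightarrow> 'a mat \<Rightarrow> bool" where
  "is_tail d E As \<longleftrightarrow>
     (\<forall>j\<le>d. E j \<noteq> E 1 \<longrightarrow> \<not> delta_adj E As 0 j) \<and>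
     (\<forall>j\<le>d. \<forall>k\<le>d. E j \<noteq> E 0 \<and> E k \<noteq> E 0 \<and> delta_adj E As 1 j \<and> delta_adj E As 1 k
        \<longrightarrow> E j = E k)"

definition normalizing :: "nat \<Rightarrow> (nat \<Rightarrow> 'a::field mat) \<Rightarrow> 'a mat \<Rightarrow> 'a \<Rightarrow> bool" where
  "normalizing d Es A \<theta> \<longleftrightarrow>
     (\<exists>v :: nat \<Rightarrow> 'a vec. \<exists>Y :: 'a mat.
        (\<forall>i\<le>d. v i \<in> carrier_vec (d+1) \<and> (\<exists>w \<in> carrier_vec (d+1). v i = Es i *\<^sub>v w)) \<and>
        det (mat_of_cols (d+1) (map v [0..<d+1])) \<noteq> 0 \<and>
        Y \<in> carrier_mat (d+1) (d+1) \<and>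
        (\<forall>j\<le>d. \<forall>k<d+1. (A *\<^sub>v v j) $ k = (\<Sum>i\<le>d. Y $$ (i,j) * v i $ k)) \<and>
        (\<forall>i\<le>d. (\<Sum>j\<le>d. Y $$ (i,j)) = \<theta>))"

end

theory Submission
  imports Defs
begin


lemma mult_entry:
  assumes "A \<in> carrier_mat n m" "B \<in> carrier_mat m l" "i < n" "j < l"
  shows "(A * B) $$ (i,j) = (\<Sum>c<m. A $$ (i,c) * B $$ (c,j))"
  using assms by (simp add: scalar_prod_def atLeast0LessThan)

lemma mult_vec_entry:
  assumes "A \<in> carrier_mat n m" "z \<in> carrier_vec m" "i < n"
  shows "(A *\<^sub>v z) $ i = (\<Sum>c<m. A $$ (i,c) * z $ c)"
  using assms by (simp add: scalar_prod_def atLeast0LessThan)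

lemma trace_swap:
  assumes "X \<in> carrier_mat n n" "Z \<in> carrier_mat n n"
  shows "mat_trace (X * Z) = mat_trace (Z * X)"
proof -
  have "mat_trace (X * Z) = (\<Sum>a<n. \<Sum>c<n. X $$ (a,c) * Z $$ (c,a))"
    unfolding mat_trace_def using assms by (auto simp: scalar_prod_def atLeast0LessThan intro!: sum.cong)
  also have "\<dots> = (\<Sum>c<n. \<Sum>a<n. Z $$ (c,a) * X $$ (a,c))"
    by (subst sum.swap) (simp add: mult.commute)
  also have "\<dots> = mat_trace (Z * X)"
    unfolding mat_trace_def using assms by (auto simp: scalar_prod_def atLeast0LessThan intro!: sum.cong)
  finally show ?thesis .
qed

lemma sum_right_id:
  fixes M :: "nat \<Rightarrow> 'a::comm_ring_1 mat"
  assumes Mc: "\<forall>m\<le>d. M m \<in> carrier_mat n n"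
    and Ms: "\<forall>k<n. \<forall>l<n. (\<Sum>m\<le>d. M m $$ (k,l)) = (if k = l then 1 else 0)"
    and X: "X \<in> carrier_mat r n" and a: "a < r" and b: "b < n"
  shows "(\<Sum>m\<le>d. (X * M m) $$ (a,b)) = X $$ (a,b)"
proof -
  have "(\<Sum>m\<le>d. (X * M m) $$ (a,b)) = (\<Sum>m\<le>d. \<Sum>c<n. X $$ (a,c) * M m $$ (c,b))"
    using Mc X a b by (intro sum.cong refl mult_entry) auto
  also have "\<dots> = (\<Sum>c<n. X $$ (a,c) * (\<Sum>m\<le>d. M m $$ (c,b)))"
    by (subst sum.swap) (simp add: sum_distrib_left)
  also have "\<dots> = (\<Sum>c<n. if c = b then X $$ (a,c) else 0)"
    using Ms b by (intro sum.cong) auto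
  also have "\<dots> = X $$ (a,b)" using b by simp
  finally show ?thesis .
qed

lemma sum_left_id:
  fixes M :: "nat \<Rightarrow> 'a::comm_ring_1 mat"
  assumes Mc: "\<forall>m\<le>d. M m \<in> carrier_mat n n"
    and Ms: "\<forall>k<n. \<forall>l<n. (\<Sum>m\<le>d. M m $$ (k,l)) = (if k = l then 1 else 0)"
    and X: "X \<in> carrier_mat n r" and a: "a < n" and b: "b < r"
  shows "(\<Sum>m\<le>d. (M m * X) $$ (a,b)) = X $$ (a,b)"
proof -
  have "(\<Sum>m\<le>d. (M m * X) $$ (a,b)) = (\<Sum>m\<le>d. \<Sum>c<n. M m $$ (a,c) * X $$ (c,b))"
    using Mc X a b by (intro sum.cong refl mult_entry) auto
  also have "\<dots> = (\<Sum>c<n. (\<Sum>m\<le>d. M m $$ (a,c)) * X $$ (c,b))"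
    by (subst sum.swap) (simp add: sum_distrib_right)
  also have "\<dots> = (\<Sum>c<n. if a = c then X $$ (c,b) else 0)"
    using Ms a by (intro sum.cong) auto
  also have "\<dots> = X $$ (a,b)" using a by simp
  finally show ?thesis .
qed

lemma sum_vec_id:
  fixes M :: "nat \<Rightarrow> 'a::comm_ring_1 mat"
  assumes Mc: "\<forall>m\<le>d. M m \<in> carrier_mat n n"
    and Ms: "\<forall>k<n. \<forall>l<n. (\<Sum>m\<le>d. M m $$ (k,l)) = (if k = l then 1 else 0)"
    and z: "z \<in> carrier_vec n" and a: "a < n"
  shows "(\<Sum>m\<le>d. (M m *\<^sub>v z) $ a) = z $ a"
proof -
  have "(\<Sum>m\<le>d. (M m *\<^sub>v z) $ a) = (\<Sum>m\<le>d. \<Sum>c<n. M m $$ (a,c) * z $ c)"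
    using Mc z a by (intro sum.cong refl mult_vec_entry) auto
  also have "\<dots> = (\<Sum>c<n. (\<Sum>m\<le>d. M m $$ (a,c)) * z $ c)"
    by (subst sum.swap) (simp add: sum_distrib_right)
  also have "\<dots> = (\<Sum>c<n. if a = c then z $ c else 0)"
    using Ms a by (intro sum.cong) auto
  also have "\<dots> = z $ a" using a by simp
  finally show ?thesis .
qed

lemma single_right:
  fixes M :: "nat \<Rightarrow> 'a::comm_ring_1 mat"
  assumes Mc: "\<forall>m\<le>d. M m \<in> carrier_mat n n"
    and Ms: "\<forall>k<n. \<forall>l<n. (\<Sum>m\<le>d. M m $$ (k,l)) = (if k = l then 1 else 0)"
    and X: "X \<in> carrier_mat n n" and j: "j \<le> d"
    and z: "\<forall>m\<le>d. m \<noteq> j \<longrightarrow> X * M m = 0\<^sub>m n n"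
  shows "X = X * M j"
proof (rule eq_matI)
  fix a b assume a: "a < dim_row (X * M j)" and b: "b < dim_col (X * M j)"
  have ab: "a < n" "b < n" using a b X Mc j by auto
  have "X $$ (a,b) = (\<Sum>m\<le>d. (X * M m) $$ (a,b))" using sum_right_id[OF Mc Ms X ab] by simp
  also have "\<dots> = (X * M j) $$ (a,b)"
    using z j ab by (subst sum.remove[of _ j]) (auto intro!: sum.neutral)
  finally show "X $$ (a,b) = (X * M j) $$ (a,b)" .
qed (use X Mc j in auto)

lemma single_left:
  fixes M :: "nat \<Rightarrow> 'a::comm_ring_1 mat"
  assumes Mc: "\<forall>m\<le>d. M m \<in> carrier_mat n n"
    and Ms: "\<forall>k<n. \<forall>l<n. (\<Sum>m\<le>d. M m $$ (k,l)) = (if k = l then 1 else 0)"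
    and X: "X \<in> carrier_mat n n" and j: "j \<le> d"
    and z: "\<forall>m\<le>d. m \<noteq> j \<longrightarrow> M m * X = 0\<^sub>m n n"
  shows "X = M j * X"
proof (rule eq_matI)
  fix a b assume a: "a < dim_row (M j * X)" and b: "b < dim_col (M j * X)"
  have ab: "a < n" "b < n" using a b X Mc j by auto
  have "X $$ (a,b) = (\<Sum>m\<le>d. (M m * X) $$ (a,b))" using sum_left_id[OF Mc Ms X ab] by simp
  also have "\<dots> = (M j * X) $$ (a,b)"
    using z j ab by (subst sum.remove[of _ j]) (auto intro!: sum.neutral)
  finally show "X $$ (a,b) = (M j * X) $$ (a,b)" .
qed (use X Mc j in auto)



lemma tri_row:
  fixes Y :: "'a::comm_ring_1 mat"
  assumes Yc: "Y \<in> carrier_mat (d+1) (d+1)"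
    and tri: "\<forall>i\<le>d. \<forall>j\<le>d. j \<noteq> i+1 \<and> i \<noteq> j+1 \<longrightarrow> Y $$ (i,j) = 0"
    and z: "z \<in> carrier_vec (d+1)" and i: "i \<le> d"
  shows "(Y *\<^sub>v z) $ i = (if 0 < i then Y $$ (i,i-1) * z $ (i-1) else 0)
                        + (if i < d then Y $$ (i,i+1) * z $ (i+1) else 0)"
proof -
  have "(Y *\<^sub>v z) $ i = (\<Sum>c<d+1. Y $$ (i,c) * z $ c)" using Yc z i by (intro mult_vec_entry) auto
  also have "\<dots> = (\<Sum>c<d+1. (if 0 < i \<and> c = i - 1 then Y $$ (i,i-1) * z $ (i-1) else 0)
                     + (if i < d \<and> c = i + 1 then Y $$ (i,i+1) * z $ (i+1) else 0))"
  proof (intro sum.cong refl)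
    fix c assume c: "c \<in> {..<d+1}"
    show "Y $$ (i,c) * z $ c = (if 0 < i \<and> c = i - 1 then Y $$ (i,i-1) * z $ (i-1) else 0)
                     + (if i < d \<and> c = i + 1 then Y $$ (i,i+1) * z $ (i+1) else 0)"
    proof (cases "c = i + 1 \<or> i = c + 1")
      case True then show ?thesis using c i by auto
    next
      case False then show ?thesis using tri c i by auto
    qed
  qed
  also have "\<dots> = (if 0 < i then Y $$ (i,i-1) * z $ (i-1) else 0)
                        + (if i < d then Y $$ (i,i+1) * z $ (i+1) else 0)"
  proof -
    have s1: "(\<Sum>c<d+1. (if 0 < i \<and> c = i - 1 then Y $$ (i,i-1) * z $ (i-1) else 0))
       = (if 0 < i then Y $$ (i,i-1) * z $ (i-1) else 0)"
      by (cases "0 < i") (use i in auto)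
    have s2: "(\<Sum>c<d+1. (if i < d \<and> c = i + 1 then Y $$ (i,i+1) * z $ (i+1) else 0))
       = (if i < d then Y $$ (i,i+1) * z $ (i+1) else 0)"
      by (cases "i < d") (use i in auto)
    show ?thesis unfolding sum.distrib s1 s2 ..
  qed
  finally show ?thesis .
qed

lemma tri_uniq:
  fixes Y :: "'a::field mat"
  assumes Yc: "Y \<in> carrier_mat (d+1) (d+1)"
    and tri: "\<forall>i\<le>d. \<forall>j\<le>d. j \<noteq> i+1 \<and> i \<noteq> j+1 \<longrightarrow> Y $$ (i,j) = 0"
    and nz: "\<forall>i<d. Y $$ (i,i+1) \<noteq> 0"
    and z: "z \<in> carrier_vec (d+1)" and u: "u \<in> carrier_vec (d+1)"
    and Yz: "Y *\<^sub>v z = \<theta> \<cdot>\<^sub>v z" and Yu: "Y *\<^sub>v u = \<theta> \<cdot>\<^sub>v u"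
    and z0: "z $ 0 = lam * u $ 0"
  shows "\<forall>i\<le>d. z $ i = lam * u $ i"
proof -
  have rz: "\<And>i. i \<le> d \<Longrightarrow> (if 0 < i then Y $$ (i,i-1) * z $ (i-1) else 0)
                        + (if i < d then Y $$ (i,i+1) * z $ (i+1) else 0) = \<theta> * z $ i"
    using tri_row[OF Yc tri z] Yz z by (metis index_smult_vec(1) carrier_vecD le_imp_less_Suc Suc_eq_plus1)
  have ru: "\<And>i. i \<le> d \<Longrightarrow> (if 0 < i then Y $$ (i,i-1) * u $ (i-1) else 0)
                        + (if i < d then Y $$ (i,i+1) * u $ (i+1) else 0) = \<theta> * u $ i"
    using tri_row[OF Yc tri u] Yu u by (metis index_smult_vec(1) carrier_vecD le_imp_less_Suc Suc_eq_plus1)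
  have step: "\<forall>i. i + 1 \<le> d \<longrightarrow> z $ i = lam * u $ i \<and> z $ (i+1) = lam * u $ (i+1)"
  proof (intro allI)
    fix i show "i + 1 \<le> d \<longrightarrow> z $ i = lam * u $ i \<and> z $ (i+1) = lam * u $ (i+1)"
    proof (induction i)
      case 0
      show ?case
      proof
        assume d: "0 + 1 \<le> d"
        have a: "Y $$ (0,1) * z $ 1 = \<theta> * z $ 0" using rz[of 0] d by simp
        have b: "Y $$ (0,1) * u $ 1 = \<theta> * u $ 0" using ru[of 0] d by simp
        have "Y $$ (0,1) * z $ 1 = Y $$ (0,1) * (lam * u $ 1)"
          using a b z0 by (simp add: algebra_simps)
        then have "z $ 1 = lam * u $ 1" using nz d by simp
        then show "z $ 0 = lam * u $ 0 \<and> z $ (0+1) = lam * u $ (0+1)" using z0 by simp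
      qed
    next
      case (Suc i)
      show ?case
      proof
        assume d: "Suc i + 1 \<le> d"
        then have IH: "z $ i = lam * u $ i" "z $ (i+1) = lam * u $ (i+1)" using Suc by auto
        have a: "Y $$ (i+1,i) * z $ i + Y $$ (i+1,i+2) * z $ (i+2) = \<theta> * z $ (i+1)"
          using rz[of "i+1"] d by simp
        have b: "Y $$ (i+1,i) * u $ i + Y $$ (i+1,i+2) * u $ (i+2) = \<theta> * u $ (i+1)"
          using ru[of "i+1"] d by simp
        have "Y $$ (i+1,i+2) * z $ (i+2) = Y $$ (i+1,i+2) * (lam * u $ (i+2))"
        proof -
          have "Y $$ (i+1,i+2) * z $ (i+2) = \<theta> * z $ (i+1) - Y $$ (i+1,i) * z $ i" using a by (simp add: algebra_simps)
          also have "\<dots> = lam * (\<theta> * u $ (i+1) - Y $$ (i+1,i) * u $ i)" using IH by (simp add: algebra_simps)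
          also have "\<dots> = lam * (Y $$ (i+1,i+2) * u $ (i+2))"
          proof -
            have "\<theta> * u $ (i+1) - Y $$ (i+1,i) * u $ i = Y $$ (i+1,i+2) * u $ (i+2)"
              using b by (simp add: algebra_simps)
            then show ?thesis by simp
          qed
          also have "\<dots> = Y $$ (i+1,i+2) * (lam * u $ (i+2))" by (simp add: algebra_simps)
          finally show ?thesis .
        qed
        moreover have "Y $$ (i+1,i+2) \<noteq> 0" using nz[rule_format, of "i+1"] d by simp
        ultimately have "z $ (i+2) = lam * u $ (i+2)" by simp
        then show "z $ Suc i = lam * u $ Suc i \<and> z $ (Suc i+1) = lam * u $ (Suc i+1)" using IH by simp
      qed
    qed
  qed
  show ?thesis
  proof (intro allI impI)
    fix i assume i: "i \<le> d"
    show "z $ i = lam * u $ i"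
    proof (cases i)
      case 0 then show ?thesis using z0 by simp
    next
      case (Suc k) then show ?thesis using step[rule_format, of k] i by simp
    qed
  qed
qed

definition diagm :: "nat \<Rightarrow> (nat \<Rightarrow> 'a::zero) \<Rightarrow> 'a mat" where
  "diagm n f = mat n n (\<lambda>(k,l). if k = l then f k else 0)"

lemma diagm_carrier[simp]: "diagm n f \<in> carrier_mat n n" unfolding diagm_def by simp
lemma diagm_dims[simp]: "dim_row (diagm n f) = n" "dim_col (diagm n f) = n" unfolding diagm_def by simp_all

lemma diagm_right:
  fixes X :: "'a::comm_ring_1 mat"
  assumes "X \<in> carrier_mat r n" "a < r" "b < n"
  shows "(X * diagm n f) $$ (a,b) = X $$ (a,b) * f b"
proof -
  have "(X * diagm n f) $$ (a,b) = (\<Sum>c<n. X $$ (a,c) * diagm n f $$ (c,b))"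
    using assms by (intro mult_entry) auto
  also have "\<dots> = (\<Sum>c<n. if c = b then X $$ (a,b) * f b else 0)"
    using assms by (intro sum.cong) (auto simp: diagm_def)
  finally show ?thesis using assms by simp
qed

lemma diagm_left:
  fixes X :: "'a::comm_ring_1 mat"
  assumes "X \<in> carrier_mat n r" "a < n" "b < r"
  shows "(diagm n f * X) $$ (a,b) = f a * X $$ (a,b)"
proof -
  have "(diagm n f * X) $$ (a,b) = (\<Sum>c<n. diagm n f $$ (a,c) * X $$ (c,b))"
    using assms by (intro mult_entry) auto
  also have "\<dots> = (\<Sum>c<n. if c = a then f a * X $$ (a,b) else 0)"
    using assms by (intro sum.cong) (auto simp: diagm_def)
  finally show ?thesis using assms by simp
qed

lemma mult_nn: "A \<in> carrier_mat n n \<Longrightarrow> B \<in> carrier_mat n n \<Longrightarrow> A * B \<in> carrier_mat n n"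
  by simp

lemma assoc_nn: "A \<in> carrier_mat n n \<Longrightarrow> B \<in> carrier_mat n n \<Longrightarrow> C \<in> carrier_mat n n
   \<Longrightarrow> A * B * C = A * (B * C)"
  by simp

lemma inv_cancel:
  fixes P Q :: "'a::comm_ring_1 mat"
  assumes Pc: "P \<in> carrier_mat n n" and Qc: "Q \<in> carrier_mat n n" and PQ: "P * Q = 1\<^sub>m n"
    and W: "W \<in> carrier_mat n m"
  shows "P * (Q * W) = W"
proof -
  have "P * (Q * W) = (P * Q) * W" using Pc Qc W by simp
  then show ?thesis using PQ W by simp
qed

lemma conj_mult:
  fixes P Q :: "'a::comm_ring_1 mat"
  assumes Pc: "P \<in> carrier_mat n n" and Qc: "Q \<in> carrier_mat n n" and PQ: "P * Q = 1\<^sub>m n"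
    and X: "X \<in> carrier_mat n n" and Z: "Z \<in> carrier_mat n n"
  shows "(Q * X * P) * (Q * Z * P) = Q * (X * Z) * P"
proof -
  have "(Q * X * P) * (Q * Z * P) = Q * (X * (P * (Q * (Z * P))))" using Pc Qc X Z by (simp add: assoc_nn mult_nn)
  also have "P * (Q * (Z * P)) = Z * P" using inv_cancel[OF Pc Qc PQ, of "Z * P" n] Z Pc by simp
  finally show ?thesis using Pc Qc X Z by (simp add: assoc_nn mult_nn)
qed

lemma conj_back:
  fixes P Q :: "'a::comm_ring_1 mat"
  assumes Pc: "P \<in> carrier_mat n n" and Qc: "Q \<in> carrier_mat n n" and PQ: "P * Q = 1\<^sub>m n"
    and QP: "Q * P = 1\<^sub>m n" and X: "X \<in> carrier_mat n n"
  shows "P * (Q * X * P) * Q = X"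
proof -
  have "P * (Q * X * P) * Q = (P * Q) * X * (P * Q)" using Pc Qc X by (simp add: assoc_nn mult_nn)
  then show ?thesis using PQ X by simp
qed

lemma conj_zero:
  fixes P Q :: "'a::comm_ring_1 mat"
  assumes Pc: "P \<in> carrier_mat n n" and Qc: "Q \<in> carrier_mat n n" and PQ: "P * Q = 1\<^sub>m n"
    and QP: "Q * P = 1\<^sub>m n" and X: "X \<in> carrier_mat n n"
  shows "Q * X * P = 0\<^sub>m n n \<longleftrightarrow> X = 0\<^sub>m n n"
proof
  assume "Q * X * P = 0\<^sub>m n n"
  then have "P * (Q * X * P) * Q = 0\<^sub>m n n" using Pc Qc by simp
  then show "X = 0\<^sub>m n n" using conj_back[OF assms] by simp
qed (use Pc Qc in simp)

lemma conj_eq: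
  fixes P Q :: "'a::comm_ring_1 mat"
  assumes Pc: "P \<in> carrier_mat n n" and Qc: "Q \<in> carrier_mat n n"
    and QP: "Q * P = 1\<^sub>m n" and X: "X \<in> carrier_mat n n" and Z: "Z \<in> carrier_mat n n"
    and e: "X * P = P * Z"
  shows "Z = Q * X * P"
proof -
  have "Q * X * P = Q * (X * P)" using Pc Qc X by simp
  also have "\<dots> = (Q * P) * Z" using e Pc Qc Z by simp
  finally show ?thesis using QP Z by simp
qed

lemma diagm_both:
  fixes X :: "'a::comm_ring_1 mat"
  assumes "X \<in> carrier_mat n n" "a < n" "b < n"
  shows "(diagm n f * X * diagm n g) $$ (a,b) = f a * X $$ (a,b) * g b"
  using diagm_right[OF mult_nn[OF diagm_carrier assms(1)] assms(2,3)] diagm_left[OF assms] by simp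

lemma transpose_smult_mat: "transpose_mat (k \<cdot>\<^sub>m A) = k \<cdot>\<^sub>m transpose_mat A"
  by (rule eq_matI) auto

lemma smult_cancel_mat:
  fixes X :: "'a::field mat"
  assumes "a \<cdot>\<^sub>m X = b \<cdot>\<^sub>m X" "a \<noteq> b" "X \<in> carrier_mat n m"
  shows "X = 0\<^sub>m n m"
proof (rule eq_matI)
  fix i j assume ij: "i < dim_row (0\<^sub>m n m)" "j < dim_col (0\<^sub>m n m)"
  have "(a \<cdot>\<^sub>m X) $$ (i,j) = (b \<cdot>\<^sub>m X) $$ (i,j)" using assms(1) by simp
  then have "a * X $$ (i,j) = b * X $$ (i,j)" using ij assms(3) by simp
  then show "X $$ (i,j) = 0\<^sub>m n m $$ (i,j)" using assms(2) ij by simp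
qed (use assms in auto)

lemma smult_mat_vec_entry:
  fixes A :: "'a::comm_ring_1 mat"
  assumes "A \<in> carrier_mat n m" "v \<in> carrier_vec m" "i < n"
  shows "((k \<cdot>\<^sub>m A) *\<^sub>v v) $ i = k * (A *\<^sub>v v) $ i"
proof -
  have "((k \<cdot>\<^sub>m A) *\<^sub>v v) $ i = (\<Sum>c<m. (k \<cdot>\<^sub>m A) $$ (i,c) * v $ c)"
    using assms by (intro mult_vec_entry) auto
  also have "\<dots> = (\<Sum>c<m. k * (A $$ (i,c) * v $ c))" using assms by (intro sum.cong) auto
  also have "\<dots> = k * (\<Sum>c<m. A $$ (i,c) * v $ c)" by (simp add: sum_distrib_left)
  also have "\<dots> = k * (A *\<^sub>v v) $ i" by (simp only: mult_vec_entry[OF assms])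
  finally show ?thesis .
qed

lemma diagm_vec:
  fixes z :: "'a::comm_ring_1 vec"
  assumes "z \<in> carrier_vec n" "a < n"
  shows "(diagm n f *\<^sub>v z) $ a = f a * z $ a"
proof -
  have "(diagm n f *\<^sub>v z) $ a = (\<Sum>c<n. diagm n f $$ (a,c) * z $ c)"
    using assms by (intro mult_vec_entry) auto
  also have "\<dots> = (\<Sum>c<n. if c = a then f a * z $ a else 0)" using assms by (intro sum.cong) (auto simp: diagm_def)
  finally show ?thesis using assms by simp
qed

lemma sum_two:
  fixes f :: "nat \<Rightarrow> 'a::comm_monoid_add"
  assumes "1 \<le> d" "\<forall>m\<le>d. m \<ge> 2 \<longrightarrow> f m = 0"
  shows "(\<Sum>m\<le>d. f m) = f 0 + f 1"
proof -
  have "(\<Sum>m\<le>d. f m) = (\<Sum>m\<in>{0,1}. f m)"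
    using assms by (intro sum.mono_neutral_cong_right) auto
  then show ?thesis by simp
qed

lemma sum_three:
  fixes f :: "nat \<Rightarrow> 'a::comm_monoid_add"
  assumes "2 \<le> d" "\<forall>m\<le>d. m \<ge> 3 \<longrightarrow> f m = 0"
  shows "(\<Sum>m\<le>d. f m) = f 0 + f 1 + f 2"
proof -
  have "(\<Sum>m\<le>d. f m) = (\<Sum>m\<in>{0,1,2}. f m)"
    using assms by (intro sum.mono_neutral_cong_right) auto
  then show ?thesis by (simp add: add.assoc)
qed

lemma zero_mat_vec: "(v :: 'a::comm_ring_1 vec) \<in> carrier_vec m \<Longrightarrow> 0\<^sub>m n m *\<^sub>v v = 0\<^sub>v n"
  by (rule eq_vecI) (auto simp: scalar_prod_def)

lemma final_alg:
  fixes t0 t1 t2 b c X Z w0 w1 x s y wdm wd be :: "'a::field"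
  assumes h1: "c + b = t0"
  and h2: "c * x + b * y = t1 * s"
  and h3: "t0 * w1 = t1 * w0"
  and h4: "t0 * wdm = t1 * wd"
  and h5: "c * ((x+be) * x) + b * ((y+be) * y) - t2 * ((s+be) * s) = X + Z * s"
  and h6: "t0 * ((w1+be) * w1) - t2 * ((w0+be) * w0) = X + Z * w0"
  and h7: "t0 * ((wdm+be) * wdm) - t2 * ((wd+be) * wd) = X + Z * wd"
  and nz: "t0 \<noteq> 0" and nd: "wd \<noteq> w0"
  shows "t0 * (y - w1) * (x - w1) + t1 * (s - w0) * (wdm - y - x + w1) - t2 * (s - w0) * (wd - s) = 0"
proof -
  define R1 where "R1 = c + b - t0"
  define R2 where "R2 = c * x + b * y - t1 * s"
  define R3 where "R3 = t0 * w1 - t1 * w0"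
  define R4 where "R4 = t0 * wdm - t1 * wd"
  define R5 where "R5 = c * ((x+be) * x) + b * ((y+be) * y) - t2 * ((s+be) * s) - X - Z * s"
  define R6 where "R6 = t0 * ((w1+be) * w1) - t2 * ((w0+be) * w0) - X - Z * w0"
  define R7 where "R7 = t0 * ((wdm+be) * wdm) - t2 * ((wd+be) * wd) - X - Z * wd"
  define Zc where "Zc = be * (t1 - t2) + t1 * (wdm + w1) - t2 * (wd + w0)"
  define R8 where "R8 = Z - Zc"
  define kk where "kk = t1 * (w1 * wd - wdm * w0)"
  have z: "R1 = 0" "R2 = 0" "R3 = 0" "R4 = 0" "R5 = 0" "R6 = 0" "R7 = 0"
    unfolding R1_def R2_def R3_def R4_def R5_def R6_def R7_def using assms by simp_all
  have i1: "t0 * kk = t1 * wd * R3 - t1 * w0 * R4"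
    unfolding kk_def R3_def R4_def by (simp add: algebra_simps)
  have "kk = 0" using i1 z nz by simp
  have i2: "R8 * (wd - w0) = -(R7 - R6) + (wdm + be) * R4 - (w1 + be) * R3 - kk"
    unfolding R8_def Zc_def R3_def R4_def R6_def R7_def kk_def by (simp add: algebra_simps)
  have "R8 = 0" using i2 z \<open>kk = 0\<close> nd by simp
  have i3: "t0 * (y - w1) * (x - w1) + t1 * (s - w0) * (wdm - y - x + w1) - t2 * (s - w0) * (wd - s)
     = -((R5 - (x + y + be) * R2 + x * y * R1) + R8 * (s - w0) + (w1 + be) * R3 - R6) - (x + y - w1) * R3"
    unfolding R1_def R2_def R3_def R5_def R6_def R8_def Zc_def by (simp add: algebra_simps)
  show ?thesis unfolding i3 using z \<open>R8 = 0\<close> by simp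
qed

lemma final_alg2:
  fixes t0 t1 t2 b c X Z w0 w1 x s y wdm wd be :: "'a::field"
  assumes h1: "c + b = t0"
  and h2: "c * x + b * y = t1 * s"
  and h3: "t0 * w1 = t1 * w0"
  and h4: "t0 * wdm = t1 * wd"
  and h5: "c * ((x+be) * x) + b * ((y+be) * y) - t2 * ((s+be) * s) = X + Z * s"
  and h6: "t0 * ((w1+be) * w1) - t2 * ((w0+be) * w0) = X + Z * w0"
  and h7: "t0 * ((wdm+be) * wdm) - t2 * ((wd+be) * wd) = X + Z * wd"
  and nz: "t0 \<noteq> 0" and nd: "wd \<noteq> w0"
  shows "t0 * ((y+be) - (w1+be)) * ((x+be) - (w1+be)) + t1 * ((s+be) - (w0+be)) * ((wdm+be) - (y+be) - (x+be) + (w1+be))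
     - t2 * ((s+be) - (w0+be)) * ((wd+be) - (s+be)) = 0"
proof -
  have e: "(wdm+be) - (y+be) - (x+be) + (w1+be) = wdm - y - x + w1" by (simp add: algebra_simps)
  have "(y+be) - (w1+be) = y - w1" "(x+be) - (w1+be) = x - w1" "(s+be) - (w0+be) = s - w0" "(wd+be) - (s+be) = wd - s"
    by simp_all
  then show ?thesis unfolding e using final_alg[OF assms] by presburger
qed



theorem proposition8p4:
  fixes d :: nat and A :: "'a::field mat" and Es E :: "nat \<Rightarrow> 'a mat"
    and th ths :: "nat \<Rightarrow> 'a" and As :: "'a mat"
  assumes d3: "d \<ge> 3"
    and A_carrier: "A \<in> carrier_mat (d+1) (d+1)"
    and Es_sys: "orth_idem_system d Es"
    and tridiag0: "\<forall>i\<le>d. \<forall>j\<le>d. (i > j + 1 \<or> j > i + 1) \<longrightarrow> Es i * A * Es j = 0\<^sub>m (d+1) (d+1)"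
    and tridiag1: "\<forall>i\<le>d. \<forall>j\<le>d. (i = j + 1 \<or> j = i + 1) \<longrightarrow> Es i * A * Es j \<noteq> 0\<^sub>m (d+1) (d+1)"
    and prim: "primitive_idempotents d A th E"
    and bip: "\<forall>i\<le>d. mat_trace (Es i * A) = 0"
    and ths_dist: "\<forall>i\<le>d. \<forall>j\<le>d. i \<noteq> j \<longrightarrow> ths i \<noteq> ths j"
    and As_def: "As = mat (d+1) (d+1) (\<lambda>(k,l). \<Sum>i\<le>d. ths i * Es i $$ (k,l))"
    and norm: "normalizing d Es A (th 0)"
    and tail: "is_tail d E As"
    and E2: "delta_adj E As 1 2"
  shows "\<forall>i. 1 \<le> i \<and> i \<le> d - 1 \<longrightarrow>
    th 0 * (ths (i+1) - ths 1) * (ths (i-1) - ths 1)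
    + th 1 * (ths i - ths 0) * (ths (d-1) - ths (i+1) - ths (i-1) + ths 1)
    - th 2 * (ths i - ths 0) * (ths d - ths i) = 0"
proof -
  let ?n = "d+1"
  from norm obtain v Y where
    vin: "\<forall>i\<le>d. v i \<in> carrier_vec ?n \<and> (\<exists>w \<in> carrier_vec ?n. v i = Es i *\<^sub>v w)" and
    detP: "det (mat_of_cols ?n (map v [0..<?n])) \<noteq> 0" and Yc: "Y \<in> carrier_mat ?n ?n" and
    Ycol: "\<forall>j\<le>d. \<forall>k<?n. (A *\<^sub>v v j) $ k = (\<Sum>i\<le>d. Y $$ (i,j) * v i $ k)" and
    Yrow: "\<forall>i\<le>d. (\<Sum>j\<le>d. Y $$ (i,j)) = th 0"
    unfolding normalizing_def by blast
  define P where "P = mat_of_cols ?n (map v [0..<?n])"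
  have Pc: "P \<in> carrier_mat ?n ?n" unfolding P_def using mat_of_cols_carrier(1)[of ?n "map v [0..<?n]"] by simp
  have Pent: "\<And>k j. k < ?n \<Longrightarrow> j < ?n \<Longrightarrow> P $$ (k,j) = v j $ k"
    unfolding P_def mat_of_cols_def by (simp del: upt_Suc)
  obtain Q where Qc: "Q \<in> carrier_mat ?n ?n" and QP: "Q * P = 1\<^sub>m ?n" and PQ: "P * Q = 1\<^sub>m ?n"
    using det_non_zero_imp_unit[OF Pc detP[folded P_def], of "()"]
    unfolding Units_def ring_mat_def by auto
  have Esc: "\<And>i. i \<le> d \<Longrightarrow> Es i \<in> carrier_mat ?n ?n" using Es_sys unfolding orth_idem_system_def by auto
  have EsEs: "\<And>i j. i \<le> d \<Longrightarrow> j \<le> d \<Longrightarrow> Es i * Es j = (if i = j then Es i else 0\<^sub>m ?n ?n)"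
    using Es_sys unfolding orth_idem_system_def by auto
  have vc: "\<And>i. i \<le> d \<Longrightarrow> v i \<in> carrier_vec ?n" using vin by auto
  have Esv: "\<And>i j. i \<le> d \<Longrightarrow> j \<le> d \<Longrightarrow> Es i *\<^sub>v v j = (if i = j then v j else 0\<^sub>v ?n)"
  proof -
    fix i j assume i: "i \<le> d" and j: "j \<le> d"
    obtain w where w: "w \<in> carrier_vec ?n" and vj: "v j = Es j *\<^sub>v w" using vin j by auto
    have "Es i *\<^sub>v v j = (Es i * Es j) *\<^sub>v w" unfolding vj using Esc[OF i] Esc[OF j] w by simp
    also have "\<dots> = (if i = j then v j else 0\<^sub>v ?n)" using EsEs[OF i j] vj w by auto
    finally show "Es i *\<^sub>v v j = (if i = j then v j else 0\<^sub>v ?n)" .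
  qed
  have colP: "\<And>j. j < ?n \<Longrightarrow> col P j = v j"
    unfolding P_def using vc by (subst col_mat_of_cols) (auto simp del: upt_Suc)
  have Pcol: "\<And>X k j. X \<in> carrier_mat ?n ?n \<Longrightarrow> k < ?n \<Longrightarrow> j < ?n \<Longrightarrow> (X * P) $$ (k,j) = (X *\<^sub>v v j) $ k"
    using Pc colP by simp
  define Dm where "Dm i = diagm ?n (\<lambda>k. if k = i then (1::'a) else 0)" for i
  have Dmc: "\<And>i. Dm i \<in> carrier_mat ?n ?n" unfolding Dm_def by simp
  have EsP: "\<And>i. i \<le> d \<Longrightarrow> Es i * P = P * Dm i"
  proof -
    fix i assume i: "i \<le> d"
    show "Es i * P = P * Dm i"
    proof (rule eq_matI)
      fix k j assume k: "k < dim_row (P * Dm i)" and j: "j < dim_col (P * Dm i)"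
      then have k': "k < ?n" and j': "j < ?n" using Pc Dmc[of i] by auto
      have "(Es i * P) $$ (k,j) = (Es i *\<^sub>v v j) $ k" using Pcol[OF Esc[OF i] k' j'] .
      also have "\<dots> = (if i = j then v j $ k else 0)" using Esv[OF i, of j] j' k' by auto
      also have "\<dots> = (P * Dm i) $$ (k,j)" unfolding Dm_def using diagm_right[OF Pc k' j'] Pent[OF k' j'] by auto
      finally show "(Es i * P) $$ (k,j) = (P * Dm i) $$ (k,j)" .
    qed (use Esc[OF i] Pc Dmc[of i] in auto)
  qed
  have AP: "A * P = P * Y"
  proof (rule eq_matI)
    fix k j assume k: "k < dim_row (P * Y)" and j: "j < dim_col (P * Y)"
    then have k': "k < ?n" and j': "j < ?n" using Pc Yc by auto
    have "(A * P) $$ (k,j) = (A *\<^sub>v v j) $ k" using Pcol[OF A_carrier k' j'] .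
    also have "\<dots> = (\<Sum>i\<le>d. Y $$ (i,j) * v i $ k)" using Ycol j' k' by auto
    also have "\<dots> = (\<Sum>c<?n. P $$ (k,c) * Y $$ (c,j))"
      unfolding lessThan_Suc_atMost[symmetric] Suc_eq_plus1[symmetric]
      using Pent k' by (intro sum.cong) (auto simp: mult.commute)
    also have "\<dots> = (P * Y) $$ (k,j)" using Pc Yc k' j' by (intro mult_entry[symmetric])
    finally show "(A * P) $$ (k,j) = (P * Y) $$ (k,j)" .
  qed (use A_carrier Pc Yc in auto)
  define T where "T = diagm ?n ths"
  have Tc: "T \<in> carrier_mat ?n ?n" unfolding T_def by simp
  have Asc: "As \<in> carrier_mat ?n ?n" unfolding As_def by simp
  have AsP: "As * P = P * T"
  proof (rule eq_matI)
    fix k j assume k: "k < dim_row (P * T)" and j: "j < dim_col (P * T)"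
    then have k': "k < ?n" and j': "j < ?n" using Pc Tc by auto
    have "(As * P) $$ (k,j) = (As *\<^sub>v v j) $ k" using Pcol[OF Asc k' j'] .
    also have "\<dots> = (\<Sum>l<?n. As $$ (k,l) * v j $ l)" using Asc vc j' k' by (intro mult_vec_entry) auto
    also have "\<dots> = (\<Sum>l<?n. \<Sum>i\<le>d. ths i * (Es i $$ (k,l) * v j $ l))"
      unfolding As_def using k' by (intro sum.cong refl) (auto simp: sum_distrib_right mult.assoc)
    also have "\<dots> = (\<Sum>i\<le>d. ths i * (\<Sum>l<?n. Es i $$ (k,l) * v j $ l))"
      unfolding sum_distrib_left by (rule sum.swap)
    also have "\<dots> = (\<Sum>i\<le>d. ths i * (Es i *\<^sub>v v j) $ k)"
    proof (intro sum.cong refl)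
      fix i assume "i \<in> {..d}" then have i: "i \<le> d" by simp
      have jd: "j \<le> d" using j' by simp
      show "ths i * (\<Sum>l<?n. Es i $$ (k,l) * v j $ l) = ths i * (Es i *\<^sub>v v j) $ k"
        using mult_vec_entry[OF Esc[OF i] vc[OF jd] k'] by simp
    qed
    also have "\<dots> = (\<Sum>i\<le>d. if i = j then ths j * v j $ k else 0)"
      using Esv j' k' by (intro sum.cong refl) auto
    also have "\<dots> = v j $ k * ths j" using j' by simp
    also have "\<dots> = (P * T) $$ (k,j)" unfolding T_def using diagm_right[OF Pc k' j'] Pent[OF k' j'] by auto
    finally show "(As * P) $$ (k,j) = (P * T) $$ (k,j)" .
  qed (use Asc Pc Tc in auto)
  note cm = conj_mult[OF Pc Qc PQ]
  note cz = conj_zero[OF Pc Qc PQ QP]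
  have Yq: "Y = Q * A * P" using conj_eq[OF Pc Qc QP A_carrier Yc AP] .
  have Dq: "\<And>i. i \<le> d \<Longrightarrow> Dm i = Q * Es i * P" using conj_eq[OF Pc Qc QP Esc Dmc EsP] by blast
  have Tq: "T = Q * As * P" using conj_eq[OF Pc Qc QP Asc Tc AsP] .
  have Ec: "\<And>i. i \<le> d \<Longrightarrow> E i \<in> carrier_mat ?n ?n" using prim unfolding primitive_idempotents_def by auto
  have EE: "\<And>i j. i \<le> d \<Longrightarrow> j \<le> d \<Longrightarrow> E i * E j = (if i = j then E i else 0\<^sub>m ?n ?n)"
    using prim unfolding primitive_idempotents_def by auto
  have AE: "\<And>i. i \<le> d \<Longrightarrow> A * E i = th i \<cdot>\<^sub>m E i" using prim unfolding primitive_idempotents_def by auto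
  have Esum: "\<forall>k<?n. \<forall>l<?n. (\<Sum>i\<le>d. E i $$ (k,l)) = (if k = l then 1 else 0)"
    using prim unfolding primitive_idempotents_def by auto
  have thd: "\<And>i j. i \<le> d \<Longrightarrow> j \<le> d \<Longrightarrow> i \<noteq> j \<Longrightarrow> th i \<noteq> th j"
    using prim unfolding primitive_idempotents_def by auto
  define F where "F i = Q * E i * P" for i
  have Fc: "\<And>i. i \<le> d \<Longrightarrow> F i \<in> carrier_mat ?n ?n" unfolding F_def using Pc Qc Ec by auto
  have FF: "\<And>i j. i \<le> d \<Longrightarrow> j \<le> d \<Longrightarrow> F i * F j = (if i = j then F i else 0\<^sub>m ?n ?n)"
    unfolding F_def using cm[OF Ec Ec] EE Pc Qc by auto
  have YF: "\<And>i. i \<le> d \<Longrightarrow> Y * F i = th i \<cdot>\<^sub>m F i"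
  proof -
    fix i assume i: "i \<le> d"
    have "Y * F i = Q * (A * E i) * P" unfolding F_def Yq using cm[OF A_carrier Ec[OF i]] .
    also have "\<dots> = Q * (th i \<cdot>\<^sub>m E i) * P" using AE[OF i] by simp
    also have "Q * (th i \<cdot>\<^sub>m E i) = th i \<cdot>\<^sub>m (Q * E i)" using mult_smult_distrib[OF Qc Ec[OF i]] .
    also have "(th i \<cdot>\<^sub>m (Q * E i)) * P = th i \<cdot>\<^sub>m (Q * E i * P)"
      using mult_smult_assoc_mat[OF mult_nn[OF Qc Ec[OF i]] Pc] .
    finally show "Y * F i = th i \<cdot>\<^sub>m F i" unfolding F_def .
  qed
  have Fsum: "\<forall>k<?n. \<forall>l<?n. (\<Sum>i\<le>d. F i $$ (k,l)) = (if k = l then 1 else 0)"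
  proof (intro allI impI)
    fix k l assume k: "k < ?n" and l: "l < ?n"
    have "(\<Sum>i\<le>d. F i $$ (k,l)) = (\<Sum>i\<le>d. \<Sum>b<?n. (Q * E i) $$ (k,b) * P $$ (b,l))"
      unfolding F_def using Qc Ec Pc k l by (intro sum.cong refl mult_entry) auto
    also have "\<dots> = (\<Sum>b<?n. (\<Sum>i\<le>d. (Q * E i) $$ (k,b)) * P $$ (b,l))"
      by (subst sum.swap) (simp add: sum_distrib_right)
    also have "\<dots> = (\<Sum>b<?n. Q $$ (k,b) * P $$ (b,l))"
      using sum_right_id[of d E ?n, OF _ Esum Qc k] Ec by (intro sum.cong refl) auto
    also have "\<dots> = (Q * P) $$ (k,l)" using Qc Pc k l by (intro mult_entry[symmetric])
    finally show "(\<Sum>i\<le>d. F i $$ (k,l)) = (if k = l then 1 else 0)" using QP k l by simp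
  qed
  have Ezero: "\<And>j k. j \<le> d \<Longrightarrow> k \<le> d \<Longrightarrow> j \<noteq> k \<Longrightarrow> E j = E k \<Longrightarrow> E j = 0\<^sub>m ?n ?n"
  proof -
    fix j k assume j: "j \<le> d" and k: "k \<le> d" and jk: "j \<noteq> k" and e: "E j = E k"
    have "E j = E j * E j" using EE[OF j j] by simp
    also have "\<dots> = E j * E k" using e by simp
    also have "\<dots> = 0\<^sub>m ?n ?n" using EE[OF j k] jk by simp
    finally show "E j = 0\<^sub>m ?n ?n" .
  qed
  have adj_iff: "\<And>i j. delta_adj E As i j \<longleftrightarrow> E i \<noteq> E j \<and> E i * As * E j \<noteq> 0\<^sub>m ?n ?n"
    unfolding delta_adj_def using Asc by auto
  have tailA: "\<forall>j\<le>d. E j \<noteq> E 1 \<longrightarrow> \<not> delta_adj E As 0 j"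
    using tail unfolding is_tail_def by (rule conjunct1)
  have tailB: "\<forall>j\<le>d. \<forall>k\<le>d. E j \<noteq> E 0 \<and> E k \<noteq> E 0 \<and> delta_adj E As 1 j \<and> delta_adj E As 1 k
        \<longrightarrow> E j = E k"
    using tail unfolding is_tail_def by (rule conjunct2)
  have zr: "\<And>i. i \<le> d \<Longrightarrow> E i * As * 0\<^sub>m ?n ?n = 0\<^sub>m ?n ?n"
    using right_mult_zero_mat[OF mult_nn[OF Ec Asc]] by blast
  have T0: "\<And>j. 2 \<le> j \<Longrightarrow> j \<le> d \<Longrightarrow> E 0 * As * E j = 0\<^sub>m ?n ?n"
  proof -
    fix j assume j2: "2 \<le> j" and jd: "j \<le> d"
    show "E 0 * As * E j = 0\<^sub>m ?n ?n"
    proof (cases "E j = E 1")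
      case True then have "E j = 0\<^sub>m ?n ?n" using Ezero[of j 1] j2 jd d3 by auto
      then show ?thesis using zr[of 0] by simp
    next
      case False
      then have "\<not> delta_adj E As 0 j" using tailA jd by blast
      then have "E 0 = E j \<or> E 0 * As * E j = 0\<^sub>m ?n ?n" using adj_iff by auto
      then show ?thesis
      proof
        assume "E 0 = E j" then have "E j = 0\<^sub>m ?n ?n" using Ezero[of j 0] j2 jd by auto
        then show ?thesis using zr[of 0] by simp
      qed
    qed
  qed
  have E12: "E 1 \<noteq> E 2" "E 1 * As * E 2 \<noteq> 0\<^sub>m ?n ?n" using E2 adj_iff by auto
  have E20: "E 2 \<noteq> E 0"
  proof
    assume "E 2 = E 0" then have "E 2 = 0\<^sub>m ?n ?n" using Ezero[of 2 0] d3 by auto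
    then show False using E12(2) zr[of 1] d3 by simp
  qed
  have T1: "\<And>j. 3 \<le> j \<Longrightarrow> j \<le> d \<Longrightarrow> E 1 * As * E j = 0\<^sub>m ?n ?n"
  proof -
    fix j assume j3: "3 \<le> j" and jd: "j \<le> d"
    show "E 1 * As * E j = 0\<^sub>m ?n ?n"
    proof (cases "E j = E 0 \<or> E j = E 1")
      case True then have "E j = 0\<^sub>m ?n ?n" using Ezero[of j 0] Ezero[of j 1] j3 jd by auto
      then show ?thesis using zr[of 1] d3 by simp
    next
      case False
      show ?thesis
      proof (rule ccontr)
        assume ne: "E 1 * As * E j \<noteq> 0\<^sub>m ?n ?n"
        then have "delta_adj E As 1 j" using adj_iff False by auto
        moreover have "delta_adj E As 1 2" using E2 .
        ultimately have "E j = E 2" using tailB[rule_format, of j 2] jd d3 False E20 by simp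
        then have "E j = 0\<^sub>m ?n ?n" using Ezero[of j 2] j3 jd by auto
        then show False using ne zr[of 1] d3 by simp
      qed
    qed
  qed
  have FTF: "\<And>i j. i \<le> d \<Longrightarrow> j \<le> d \<Longrightarrow> F i * T * F j = Q * (E i * As * E j) * P"
  proof -
    fix i j assume i: "i \<le> d" and j: "j \<le> d"
    have "F i * T = Q * (E i * As) * P" unfolding F_def Tq using cm[OF Ec[OF i] Asc] .
    then have "F i * T * F j = Q * (E i * As * E j) * P" unfolding F_def using cm[OF mult_nn[OF Ec[OF i] Asc] Ec[OF j]] by simp
    then show "F i * T * F j = Q * (E i * As * E j) * P" .
  qed
  have F0T: "\<And>j. 2 \<le> j \<Longrightarrow> j \<le> d \<Longrightarrow> F 0 * T * F j = 0\<^sub>m ?n ?n"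
  proof -
    fix j assume "2 \<le> j" "j \<le> d"
    then show "F 0 * T * F j = 0\<^sub>m ?n ?n" using FTF[of 0 j] T0[of j] cz[OF mult_nn[OF mult_nn[OF Ec[of 0] Asc] Ec[of j]]] by auto
  qed
  have F1T: "\<And>j. 3 \<le> j \<Longrightarrow> j \<le> d \<Longrightarrow> F 1 * T * F j = 0\<^sub>m ?n ?n"
  proof -
    fix j assume "3 \<le> j" "j \<le> d"
    then show "F 1 * T * F j = 0\<^sub>m ?n ?n" using FTF[of 1 j] T1[of j] cz[OF mult_nn[OF mult_nn[OF Ec[of 1] Asc] Ec[of j]]] d3 by auto
  qed
  have DYD: "\<And>i j. i \<le> d \<Longrightarrow> j \<le> d \<Longrightarrow> Dm i * Y * Dm j = Q * (Es i * A * Es j) * P"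
  proof -
    fix i j assume i: "i \<le> d" and j: "j \<le> d"
    have "Dm i * Y = Q * (Es i * A) * P" unfolding Dq[OF i] Yq using cm[OF Esc[OF i] A_carrier] .
    then show "Dm i * Y * Dm j = Q * (Es i * A * Es j) * P"
      unfolding Dq[OF j] using cm[OF mult_nn[OF Esc[OF i] A_carrier] Esc[OF j]] by simp
  qed
  have DYDent: "\<And>i j a b. a < ?n \<Longrightarrow> b < ?n \<Longrightarrow> (Dm i * Y * Dm j) $$ (a,b) = (if a = i \<and> b = j then Y $$ (a,b) else 0)"
    unfolding Dm_def using diagm_both[OF Yc] by simp
  have Yfar: "\<And>i j. i \<le> d \<Longrightarrow> j \<le> d \<Longrightarrow> (i > j + 1 \<or> j > i + 1) \<Longrightarrow> Y $$ (i,j) = 0"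
  proof -
    fix i j assume i: "i \<le> d" and j: "j \<le> d" and f: "i > j + 1 \<or> j > i + 1"
    have "Es i * A * Es j = 0\<^sub>m ?n ?n" using tridiag0 i j f by blast
    then have "Dm i * Y * Dm j = 0\<^sub>m ?n ?n" using DYD[OF i j] cz[OF mult_nn[OF mult_nn[OF Esc[OF i] A_carrier] Esc[OF j]]] by simp
    then have "(Dm i * Y * Dm j) $$ (i,j) = 0" using i j by simp
    then show "Y $$ (i,j) = 0" using DYDent[of i j i j] i j by simp
  qed
  have Ynz: "\<And>i j. i \<le> d \<Longrightarrow> j \<le> d \<Longrightarrow> (i = j + 1 \<or> j = i + 1) \<Longrightarrow> Y $$ (i,j) \<noteq> 0"
  proof
    fix i j assume i: "i \<le> d" and j: "j \<le> d" and f: "i = j + 1 \<or> j = i + 1" and z: "Y $$ (i,j) = 0"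
    have "Dm i * Y * Dm j = 0\<^sub>m ?n ?n"
    proof (rule eq_matI)
      fix a b assume "a < dim_row (0\<^sub>m ?n ?n)" "b < dim_col (0\<^sub>m ?n ?n)"
      then show "(Dm i * Y * Dm j) $$ (a,b) = 0\<^sub>m ?n ?n $$ (a,b)" using DYDent[of a b i j] z by auto
    qed (use Dmc[of i] Dmc[of j] Yc in auto)
    then have "Es i * A * Es j = 0\<^sub>m ?n ?n"
      using DYD[OF i j] cz[OF mult_nn[OF mult_nn[OF Esc[OF i] A_carrier] Esc[OF j]]] by simp
    then show False using tridiag1 i j f by blast
  qed
  have Ydiag: "\<And>i. i \<le> d \<Longrightarrow> Y $$ (i,i) = 0"
  proof -
    fix i assume i: "i \<le> d"
    have Esq: "Es i = P * Dm i * Q" unfolding Dq[OF i] using conj_back[OF Pc Qc PQ QP Esc[OF i]] by simp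
    have "mat_trace (Es i * A) = mat_trace (P * (Dm i * Q * A))"
      unfolding Esq using Pc Dmc[of i] Qc A_carrier by (simp add: assoc_nn mult_nn)
    also have "\<dots> = mat_trace (Dm i * Q * A * P)"
      by (rule trace_swap) (use Pc Dmc[of i] Qc A_carrier in \<open>simp add: mult_nn\<close>)+
    also have "Dm i * Q * A * P = Dm i * Y" unfolding Yq using Pc Dmc[of i] Qc A_carrier by (simp add: assoc_nn mult_nn)
    also have "mat_trace (Dm i * Y) = (\<Sum>a<?n. (if a = i then 1 else 0) * Y $$ (a,a))"
      unfolding mat_trace_def Dm_def using diagm_left[OF Yc] Yc by (intro sum.cong) auto
    also have "\<dots> = (\<Sum>a<?n. if a = i then Y $$ (a,a) else 0)" by (intro sum.cong) auto
    also have "\<dots> = Y $$ (i,i)"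
    proof -
      have ii: "i \<in> {..<?n}" using i by simp
      show ?thesis using ii by (subst sum.delta) auto
    qed
    finally show "Y $$ (i,i) = 0" using bip i by simp
  qed
  have tri: "\<forall>i\<le>d. \<forall>j\<le>d. j \<noteq> i+1 \<and> i \<noteq> j+1 \<longrightarrow> Y $$ (i,j) = 0"
  proof (intro allI impI)
    fix i j assume "i \<le> d" "j \<le> d" "j \<noteq> i + 1 \<and> i \<noteq> j + 1"
    then show "Y $$ (i,j) = 0"
    proof (cases "i = j")
      case True then show ?thesis using Ydiag \<open>i \<le> d\<close> by simp
    next
      case False then have "i > j + 1 \<or> j > i + 1" using \<open>j \<noteq> i + 1 \<and> i \<noteq> j + 1\<close> by linarith
      then show ?thesis using Yfar \<open>i \<le> d\<close> \<open>j \<le> d\<close> by blast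
    qed
  qed
  have nzu: "\<forall>i<d. Y $$ (i,i+1) \<noteq> 0" using Ynz by auto
  have nzl: "\<forall>i<d. Y $$ (i+1,i) \<noteq> 0" using Ynz by auto
  define kk :: "nat \<Rightarrow> 'a" where "kk = rec_nat 1 (\<lambda>i r. r * Y $$ (i,i+1) / Y $$ (i+1,i))"
  have kk0: "kk 0 = 1" unfolding kk_def by simp
  have kkS: "\<And>i. kk (Suc i) = kk i * Y $$ (i,i+1) / Y $$ (i+1,i)" unfolding kk_def by simp
  have kknz: "\<And>i. i \<le> d \<Longrightarrow> kk i \<noteq> 0"
  proof -
    fix i show "i \<le> d \<Longrightarrow> kk i \<noteq> 0"
    proof (induction i)
      case 0 show ?case using kk0 by simp
    next
      case (Suc i) then show ?case using kkS[of i] nzu nzl by simp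
    qed
  qed
  define K where "K = diagm ?n kk"
  define Ki where "Ki = diagm ?n (\<lambda>i. inverse (kk i))"
  have Kc: "K \<in> carrier_mat ?n ?n" and Kic: "Ki \<in> carrier_mat ?n ?n" unfolding K_def Ki_def by simp_all
  have KY: "K * Y = transpose_mat Y * K"
  proof (rule eq_matI)
    fix a b assume a: "a < dim_row (transpose_mat Y * K)" and b: "b < dim_col (transpose_mat Y * K)"
    then have a': "a < ?n" and b': "b < ?n" using Yc Kc by auto
    have l: "(K * Y) $$ (a,b) = kk a * Y $$ (a,b)" unfolding K_def using diagm_left[OF Yc a' b'] .
    have r: "(transpose_mat Y * K) $$ (a,b) = Y $$ (b,a) * kk b"
      unfolding K_def using diagm_right[of "transpose_mat Y" ?n ?n a b] Yc a' b' by simp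
    show "(K * Y) $$ (a,b) = (transpose_mat Y * K) $$ (a,b)"
    proof (cases "b = a + 1")
      case True
      then have "a < d" using b' by simp
      then show ?thesis unfolding l r using True kkS[of a] nzl by (simp add: field_simps)
    next
      case False
      show ?thesis
      proof (cases "a = b + 1")
        case True
        then have "b < d" using a' by simp
        then show ?thesis unfolding l r using True kkS[of b] nzl by (simp add: field_simps)
      next
        case False2: False
        then show ?thesis unfolding l r using tri False a' b' by simp
      qed
    qed
  qed (use Yc Kc in auto)
  define G where "G m = Ki * transpose_mat (F m) * K" for m
  have Gc: "\<And>m. m \<le> d \<Longrightarrow> G m \<in> carrier_mat ?n ?n" unfolding G_def using Kc Kic Fc by (simp add: mult_nn)
  have Gent: "\<And>m a b. m \<le> d \<Longrightarrow> a < ?n \<Longrightarrow> b < ?n \<Longrightarrow> G m $$ (a,b) = inverse (kk a) * F m $$ (b,a) * kk b"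
  proof -
    fix m a b assume m: "m \<le> d" and a: "a < ?n" and b: "b < ?n"
    have FmT: "transpose_mat (F m) \<in> carrier_mat ?n ?n" using Fc[OF m] by simp
    have "G m $$ (a,b) = inverse (kk a) * transpose_mat (F m) $$ (a,b) * kk b"
      unfolding G_def K_def Ki_def by (rule diagm_both[OF FmT a b])
    then show "G m $$ (a,b) = inverse (kk a) * F m $$ (b,a) * kk b" using Fc[OF m] a b by simp
  qed
  have Gsum: "\<forall>k<?n. \<forall>l<?n. (\<Sum>m\<le>d. G m $$ (k,l)) = (if k = l then 1 else 0)"
  proof (intro allI impI)
    fix a b assume a: "a < ?n" and b: "b < ?n"
    have "(\<Sum>m\<le>d. G m $$ (a,b)) = (\<Sum>m\<le>d. inverse (kk a) * F m $$ (b,a) * kk b)"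
      using Gent a b by simp
    also have "\<dots> = inverse (kk a) * (\<Sum>m\<le>d. F m $$ (b,a)) * kk b"
      by (simp add: sum_distrib_left sum_distrib_right)
    also have "\<dots> = (if a = b then 1 else 0)" using Fsum a b kknz[of a] by auto
    finally show "(\<Sum>m\<le>d. G m $$ (a,b)) = (if a = b then 1 else 0)" .
  qed
  have GY: "\<And>m. m \<le> d \<Longrightarrow> G m * Y = th m \<cdot>\<^sub>m G m"
  proof -
    fix m assume m: "m \<le> d"
    note FmT = transpose_carrier_mat[THEN iffD2, OF Fc[OF m]]
    have "G m * Y = Ki * (transpose_mat (F m) * (K * Y))" unfolding G_def using Kic FmT Kc Yc by (simp add: assoc_nn mult_nn)
    also have "\<dots> = Ki * ((transpose_mat (F m) * transpose_mat Y) * K)" unfolding KY using FmT Yc Kc by (simp add: assoc_nn mult_nn)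
    also have "transpose_mat (F m) * transpose_mat Y = transpose_mat (Y * F m)" using transpose_mult[OF Yc Fc[OF m]] by simp
    also have "\<dots> = th m \<cdot>\<^sub>m transpose_mat (F m)" unfolding YF[OF m] transpose_smult_mat ..
    also have "Ki * ((th m \<cdot>\<^sub>m transpose_mat (F m)) * K) = th m \<cdot>\<^sub>m G m"
    proof -
      have "(th m \<cdot>\<^sub>m transpose_mat (F m)) * K = th m \<cdot>\<^sub>m (transpose_mat (F m) * K)"
        using mult_smult_assoc_mat[OF FmT Kc] .
      moreover have "Ki * (th m \<cdot>\<^sub>m (transpose_mat (F m) * K)) = th m \<cdot>\<^sub>m (Ki * (transpose_mat (F m) * K))"
        using mult_smult_distrib[OF Kic mult_nn[OF FmT Kc]] .
      ultimately show ?thesis unfolding G_def using Kic FmT Kc by (simp add: assoc_nn mult_nn)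
    qed
    finally show "G m * Y = th m \<cdot>\<^sub>m G m" .
  qed
  have GF0: "\<And>m j. m \<le> d \<Longrightarrow> j \<le> d \<Longrightarrow> m \<noteq> j \<Longrightarrow> G m * F j = 0\<^sub>m ?n ?n"
  proof -
    fix m j assume m: "m \<le> d" and j: "j \<le> d" and mj: "m \<noteq> j"
    have "th m \<cdot>\<^sub>m (G m * F j) = (G m * Y) * F j" using GY[OF m] Gc[OF m] Fc[OF j] by (simp add: mult_smult_assoc_mat)
    also have "\<dots> = G m * (Y * F j)" using Gc[OF m] Fc[OF j] Yc by (simp add: assoc_nn)
    also have "\<dots> = th j \<cdot>\<^sub>m (G m * F j)" using YF[OF j] Gc[OF m] Fc[OF j] by (simp add: mult_smult_distrib)
    finally show "G m * F j = 0\<^sub>m ?n ?n" using smult_cancel_mat thd[OF m j mj] mult_nn[OF Gc[OF m] Fc[OF j]] by blast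
  qed
  have GF: "\<And>j. j \<le> d \<Longrightarrow> G j = F j"
  proof -
    fix j assume j: "j \<le> d"
    have "F j = G j * F j" using single_left[of d G ?n "F j" j, OF _ Gsum Fc[OF j] j] Gc GF0 j by blast
    moreover have "G j = G j * F j" using single_right[of d F ?n "G j" j, OF _ Fsum Gc[OF j] j] Fc GF0 j by blast
    ultimately show "G j = F j" by simp
  qed
  have KKi: "K * Ki = 1\<^sub>m ?n"
  proof (rule eq_matI)
    fix a b assume "a < dim_row (1\<^sub>m ?n)" "b < dim_col (1\<^sub>m ?n)"
    then have a: "a < ?n" and b: "b < ?n" by auto
    have "(K * Ki) $$ (a,b) = K $$ (a,b) * inverse (kk b)" unfolding Ki_def using diagm_right[OF Kc a b] .
    then show "(K * Ki) $$ (a,b) = 1\<^sub>m ?n $$ (a,b)" using a b kknz[of a] unfolding K_def diagm_def by auto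
  qed (use Kc Kic in auto)
  have TT: "transpose_mat T = T" unfolding T_def diagm_def by (rule eq_matI) auto
  have KiTK: "Ki * T * K = T"
  proof (rule eq_matI)
    fix a b assume "a < dim_row T" "b < dim_col T"
    then have a: "a < ?n" and b: "b < ?n" using Tc by auto
    have "(Ki * T * K) $$ (a,b) = inverse (kk a) * T $$ (a,b) * kk b" unfolding Ki_def K_def using diagm_both[OF Tc a b] .
    then show "(Ki * T * K) $$ (a,b) = T $$ (a,b)" using a b kknz[of a] unfolding T_def diagm_def by auto
  qed (use Kc Kic Tc in auto)
  have KiTKW: "\<And>W :: 'a mat. W \<in> carrier_mat ?n ?n \<Longrightarrow> Ki * (T * (K * W)) = T * W"
  proof -
    fix W :: "'a mat" assume W: "W \<in> carrier_mat ?n ?n"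
    have "Ki * (T * (K * W)) = (Ki * T * K) * W" using Kic Tc Kc W by (simp add: assoc_nn mult_nn)
    then show "Ki * (T * (K * W)) = T * W" unfolding KiTK .
  qed
  have Ft: "\<And>m. m \<le> d \<Longrightarrow> transpose_mat (F m) = K * F m * Ki"
  proof -
    fix m assume m: "m \<le> d"
    have FmT: "transpose_mat (F m) \<in> carrier_mat ?n ?n" using Fc[OF m] by simp
    have "K * F m * Ki = K * (Ki * transpose_mat (F m) * K) * Ki" using GF[OF m] unfolding G_def by simp
    also have "\<dots> = (K * Ki) * transpose_mat (F m) * (K * Ki)" using Kc Kic FmT by (simp add: assoc_nn mult_nn)
    finally show "transpose_mat (F m) = K * F m * Ki" unfolding KKi using FmT by simp
  qed
  have trFTF: "\<And>a b. a \<le> d \<Longrightarrow> b \<le> d \<Longrightarrow> transpose_mat (F a * T * F b) = K * (F b * T * F a) * Ki"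
  proof -
    fix a b assume a: "a \<le> d" and b: "b \<le> d"
    have "transpose_mat (F a * T * F b) = transpose_mat (F b) * (transpose_mat T * transpose_mat (F a))"
      using transpose_mult[OF mult_nn[OF Fc[OF a] Tc] Fc[OF b]] transpose_mult[OF Fc[OF a] Tc] by simp
    also have "\<dots> = K * (F b * (Ki * (T * (K * (F a * Ki)))))"
      unfolding TT Ft[OF a] Ft[OF b] using Kc Kic Tc Fc[OF a] Fc[OF b] by (simp add: assoc_nn mult_nn)
    also have "Ki * (T * (K * (F a * Ki))) = T * (F a * Ki)" using KiTKW mult_nn[OF Fc[OF a] Kic] by simp
    finally show "transpose_mat (F a * T * F b) = K * (F b * T * F a) * Ki"
      using Kc Kic Tc Fc[OF a] Fc[OF b] by (simp add: assoc_nn mult_nn)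
  qed
  have swapz: "\<And>a b. a \<le> d \<Longrightarrow> b \<le> d \<Longrightarrow> F b * T * F a = 0\<^sub>m ?n ?n \<Longrightarrow> F a * T * F b = 0\<^sub>m ?n ?n"
  proof -
    fix a b assume a: "a \<le> d" and b: "b \<le> d" and z: "F b * T * F a = 0\<^sub>m ?n ?n"
    have "transpose_mat (F a * T * F b) = 0\<^sub>m ?n ?n" unfolding trFTF[OF a b] z using Kc Kic by simp
    then have "transpose_mat (transpose_mat (F a * T * F b)) = 0\<^sub>m ?n ?n" by simp
    then show "F a * T * F b = 0\<^sub>m ?n ?n" by simp
  qed
  have FT0: "\<And>j. 2 \<le> j \<Longrightarrow> j \<le> d \<Longrightarrow> F j * T * F 0 = 0\<^sub>m ?n ?n"
  proof -
    fix j assume "2 \<le> j" "j \<le> d"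
    then show "F j * T * F 0 = 0\<^sub>m ?n ?n" using swapz[of j 0] F0T[of j] by simp
  qed
  have FT1: "\<And>j. 3 \<le> j \<Longrightarrow> j \<le> d \<Longrightarrow> F j * T * F 1 = 0\<^sub>m ?n ?n"
  proof -
    fix j assume "3 \<le> j" "j \<le> d"
    then show "F j * T * F 1 = 0\<^sub>m ?n ?n" using swapz[of j 1] F1T[of j] d3 by simp
  qed
  have FY: "\<And>m. m \<le> d \<Longrightarrow> F m * Y = th m \<cdot>\<^sub>m F m" using GY GF by metis
  have eigv: "\<And>M \<theta> z a. M \<in> carrier_mat ?n ?n \<Longrightarrow> Y * M = \<theta> \<cdot>\<^sub>m M \<Longrightarrow> z \<in> carrier_vec ?n \<Longrightarrow> a < ?n
     \<Longrightarrow> (Y *\<^sub>v (M *\<^sub>v z)) $ a = \<theta> * (M *\<^sub>v z) $ a"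
  proof -
    fix M :: "'a mat" and \<theta> :: 'a and z :: "'a vec" and a :: nat assume M: "M \<in> carrier_mat ?n ?n" and e: "Y * M = \<theta> \<cdot>\<^sub>m M" and z: "z \<in> carrier_vec ?n" and a: "a < ?n"
    have "Y *\<^sub>v (M *\<^sub>v z) = (Y * M) *\<^sub>v z" using Yc M z by simp
    then show "(Y *\<^sub>v (M *\<^sub>v z)) $ a = \<theta> * (M *\<^sub>v z) $ a" unfolding e using smult_mat_vec_entry[OF M z a] by simp
  qed
  have eigvv: "\<And>M \<theta> z. M \<in> carrier_mat ?n ?n \<Longrightarrow> Y * M = \<theta> \<cdot>\<^sub>m M \<Longrightarrow> z \<in> carrier_vec ?n
     \<Longrightarrow> Y *\<^sub>v (M *\<^sub>v z) = \<theta> \<cdot>\<^sub>v (M *\<^sub>v z)"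
  proof -
    fix M :: "'a mat" and \<theta> :: 'a and z :: "'a vec" assume M: "M \<in> carrier_mat ?n ?n" and e: "Y * M = \<theta> \<cdot>\<^sub>m M" and z: "z \<in> carrier_vec ?n"
    show "Y *\<^sub>v (M *\<^sub>v z) = \<theta> \<cdot>\<^sub>v (M *\<^sub>v z)"
      by (rule eq_vecI) (use eigv[OF M e z] Yc M in auto)
  qed
  define one where "one = vec ?n (\<lambda>_. (1::'a))"
  have onec: "one \<in> carrier_vec ?n" unfolding one_def by simp
  have Yone: "Y *\<^sub>v one = th 0 \<cdot>\<^sub>v one"
  proof (rule eq_vecI)
    fix a assume "a < dim_vec (th 0 \<cdot>\<^sub>v one)"
    then have a: "a < ?n" using onec by simp
    have "(Y *\<^sub>v one) $ a = (\<Sum>c<?n. Y $$ (a,c) * one $ c)" using mult_vec_entry[OF Yc onec a] .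
    also have "\<dots> = (\<Sum>j\<le>d. Y $$ (a,j))" unfolding one_def lessThan_Suc_atMost[symmetric] Suc_eq_plus1[symmetric] by simp
    also have "\<dots> = th 0" using Yrow a by simp
    finally show "(Y *\<^sub>v one) $ a = (th 0 \<cdot>\<^sub>v one) $ a" using a unfolding one_def by simp
  qed (use Yc onec in auto)
  have rowsum: "\<And>a. a \<le> d \<Longrightarrow> (if 0 < a then Y $$ (a,a-1) else 0) + (if a < d then Y $$ (a,a+1) else 0) = th 0"
  proof -
    fix a assume a: "a \<le> d"
    have "(Y *\<^sub>v one) $ a = th 0" using Yone a onec unfolding one_def by simp
    then show "(if 0 < a then Y $$ (a,a-1) else 0) + (if a < d then Y $$ (a,a+1) else 0) = th 0"
      using tri_row[OF Yc tri onec a] a unfolding one_def by (auto split: if_splits)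
  qed
  have Fone0: "\<And>m a. m \<le> d \<Longrightarrow> m \<noteq> 0 \<Longrightarrow> a < ?n \<Longrightarrow> (F m *\<^sub>v one) $ a = 0"
  proof -
    fix m a assume m: "m \<le> d" and m0: "m \<noteq> 0" and a: "a < ?n"
    have "F m *\<^sub>v (Y *\<^sub>v one) = (F m * Y) *\<^sub>v one" using Fc[OF m] Yc onec by simp
    then have "(F m *\<^sub>v (th 0 \<cdot>\<^sub>v one)) $ a = ((th m \<cdot>\<^sub>m F m) *\<^sub>v one) $ a" unfolding Yone FY[OF m] by simp
    then have "th 0 * (F m *\<^sub>v one) $ a = th m * (F m *\<^sub>v one) $ a"
      using smult_mat_vec_entry[OF Fc[OF m] onec a] mult_mat_vec[OF Fc[OF m] onec] a Fc[OF m] by simp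
    then show "(F m *\<^sub>v one) $ a = 0" using thd[OF m le0] m0 by simp
  qed
  have F0one: "F 0 *\<^sub>v one = one"
  proof (rule eq_vecI)
    fix a assume "a < dim_vec one"
    then have a: "a < ?n" using onec by simp
    have "one $ a = (\<Sum>m\<le>d. (F m *\<^sub>v one) $ a)" using sum_vec_id[of d F ?n, OF _ Fsum onec a] Fc by simp
    also have "\<dots> = (F 0 *\<^sub>v one) $ a"
      using Fone0 a by (subst sum.remove[of _ 0]) (auto intro!: sum.neutral)
    finally show "(F 0 *\<^sub>v one) $ a = one $ a" by simp
  qed (use Fc[of 0] onec in auto)
  define tv where "tv = T *\<^sub>v one"
  have tvc: "tv \<in> carrier_vec ?n" unfolding tv_def using Tc onec by simp
  have tvent: "\<And>a. a < ?n \<Longrightarrow> tv $ a = ths a" unfolding tv_def T_def using diagm_vec[OF onec] unfolding one_def by simp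
  have Fjt: "\<And>j. 2 \<le> j \<Longrightarrow> j \<le> d \<Longrightarrow> F j *\<^sub>v tv = 0\<^sub>v ?n"
  proof -
    fix j assume j2: "2 \<le> j" and jd: "j \<le> d"
    have "F j *\<^sub>v tv = F j *\<^sub>v (T *\<^sub>v (F 0 *\<^sub>v one))" unfolding tv_def F0one ..
    also have "\<dots> = (F j * T * F 0) *\<^sub>v one"
      using assoc_mult_mat_vec[OF mult_nn[OF Fc[OF jd] Tc] Fc[of 0] onec] assoc_mult_mat_vec[OF Fc[OF jd] Tc mult_mat_vec_carrier[OF Fc[of 0] onec]] by simp
    also have "\<dots> = 0\<^sub>v ?n" unfolding FT0[OF j2 jd] using zero_mat_vec[OF onec] .
    finally show "F j *\<^sub>v tv = 0\<^sub>v ?n" .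
  qed
  define p where "p = F 0 *\<^sub>v tv"
  define w where "w = F 1 *\<^sub>v tv"
  have pc: "p \<in> carrier_vec ?n" and wc: "w \<in> carrier_vec ?n" unfolding p_def w_def using Fc[of 0] Fc[of 1] d3 tvc by auto
  have Yp: "Y *\<^sub>v p = th 0 \<cdot>\<^sub>v p" unfolding p_def using eigvv[OF Fc[of 0] YF[of 0] tvc] by simp
  have Yw: "Y *\<^sub>v w = th 1 \<cdot>\<^sub>v w" unfolding w_def using eigvv[OF Fc[of 1] YF[of 1] tvc] d3 by simp
  define \<beta> where "\<beta> = p $ 0"
  have pconst: "\<forall>a\<le>d. p $ a = \<beta> * one $ a"
    by (rule tri_uniq[OF Yc tri nzu pc onec Yp Yone]) (simp add: \<beta>_def one_def)
  have wv: "\<And>a. a \<le> d \<Longrightarrow> w $ a = ths a - \<beta>"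
  proof -
    fix a assume a: "a \<le> d"
    have "tv $ a = (\<Sum>m\<le>d. (F m *\<^sub>v tv) $ a)" using sum_vec_id[of d F ?n, OF _ Fsum tvc] Fc a by simp
    also have "\<dots> = (F 0 *\<^sub>v tv) $ a + (F 1 *\<^sub>v tv) $ a"
      by (rule sum_two) (use d3 Fjt a in auto)
    finally have "ths a = p $ a + w $ a" unfolding p_def w_def using tvent a by simp
    then show "w $ a = ths a - \<beta>" using pconst a unfolding one_def by simp
  qed
  have w0: "w $ 0 \<noteq> 0"
  proof
    assume z: "w $ 0 = 0"
    have "\<forall>a\<le>d. w $ a = 0 * w $ a" using tri_uniq[OF Yc tri nzu wc wc Yw Yw, of 0] z by simp
    then have "ths 0 = ths 1" using wv[of 0] wv[of 1] d3 by simp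
    then show False using ths_dist d3 by auto
  qed
  define r where "r = T *\<^sub>v w"
  have rc: "r \<in> carrier_vec ?n" unfolding r_def using Tc wc by simp
  have rent: "\<And>a. a < ?n \<Longrightarrow> r $ a = ths a * w $ a" unfolding r_def T_def using diagm_vec[OF wc] by simp
  have Fjr: "\<And>j. 3 \<le> j \<Longrightarrow> j \<le> d \<Longrightarrow> F j *\<^sub>v r = 0\<^sub>v ?n"
  proof -
    fix j assume j3: "3 \<le> j" and jd: "j \<le> d"
    have F1c: "F 1 \<in> carrier_mat ?n ?n" using Fc[of 1] d3 by simp
    have "F j *\<^sub>v r = F j *\<^sub>v (T *\<^sub>v (F 1 *\<^sub>v tv))" unfolding r_def w_def ..
    also have "\<dots> = (F j * T * F 1) *\<^sub>v tv"
      using assoc_mult_mat_vec[OF mult_nn[OF Fc[OF jd] Tc] F1c tvc] assoc_mult_mat_vec[OF Fc[OF jd] Tc mult_mat_vec_carrier[OF F1c tvc]] by simp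
    also have "\<dots> = 0\<^sub>v ?n" unfolding FT1[OF j3 jd] using zero_mat_vec[OF tvc] .
    finally show "F j *\<^sub>v r = 0\<^sub>v ?n" .
  qed
  define r0 where "r0 = F 0 *\<^sub>v r"
  define r1 where "r1 = F 1 *\<^sub>v r"
  define r2 where "r2 = F 2 *\<^sub>v r"
  have r0c: "r0 \<in> carrier_vec ?n" and r1c: "r1 \<in> carrier_vec ?n" and r2c: "r2 \<in> carrier_vec ?n"
    unfolding r0_def r1_def r2_def using Fc[of 0] Fc[of 1] Fc[of 2] d3 rc by auto
  have Yr0: "Y *\<^sub>v r0 = th 0 \<cdot>\<^sub>v r0" unfolding r0_def using eigvv[OF Fc[of 0] YF[of 0] rc] by simp
  have Yr1: "Y *\<^sub>v r1 = th 1 \<cdot>\<^sub>v r1" unfolding r1_def using eigvv[OF Fc[of 1] YF[of 1] rc] d3 by simp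
  have Yr2: "Y *\<^sub>v r2 = th 2 \<cdot>\<^sub>v r2" unfolding r2_def using eigvv[OF Fc[of 2] YF[of 2] rc] d3 by simp
  have rsplit: "\<And>a. a < ?n \<Longrightarrow> r $ a = r0 $ a + r1 $ a + r2 $ a"
  proof -
    fix a assume a: "a < ?n"
    have "r $ a = (\<Sum>m\<le>d. (F m *\<^sub>v r) $ a)" using sum_vec_id[of d F ?n, OF _ Fsum rc] Fc a by simp
    also have "\<dots> = (F 0 *\<^sub>v r) $ a + (F 1 *\<^sub>v r) $ a + (F 2 *\<^sub>v r) $ a"
      by (rule sum_three) (use d3 Fjr a in auto)
    finally show "r $ a = r0 $ a + r1 $ a + r2 $ a" unfolding r0_def r1_def r2_def .
  qed
  have rsum: "r = r0 + r1 + r2" by (rule eq_vecI) (use rsplit rc r0c r1c r2c in auto)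
  have Yrv: "\<And>a. a < ?n \<Longrightarrow> (Y *\<^sub>v r) $ a = th 0 * r0 $ a + th 1 * r1 $ a + th 2 * r2 $ a"
  proof -
    fix a assume a: "a < ?n"
    have "Y *\<^sub>v r = Y *\<^sub>v r0 + Y *\<^sub>v r1 + Y *\<^sub>v r2" unfolding rsum
      using mult_add_distrib_mat_vec[OF Yc add_carrier_vec[OF r0c r1c] r2c] mult_add_distrib_mat_vec[OF Yc r0c r1c] by simp
    then show "(Y *\<^sub>v r) $ a = th 0 * r0 $ a + th 1 * r1 $ a + th 2 * r2 $ a"
      unfolding Yr0 Yr1 Yr2 using a r0c r1c r2c by simp
  qed
  define x where "x = r0 $ 0"
  define y where "y = r1 $ 0 / w $ 0"
  have r0v: "\<forall>a\<le>d. r0 $ a = x * one $ a"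
    by (rule tri_uniq[OF Yc tri nzu r0c onec Yr0 Yone]) (simp add: x_def one_def)
  have r1v: "\<forall>a\<le>d. r1 $ a = y * w $ a"
    by (rule tri_uniq[OF Yc tri nzu r1c wc Yr1 Yw]) (use w0 in \<open>simp add: y_def\<close>)
  define XX where "XX = (th 0 - th 2) * x"
  define ZZ where "ZZ = (th 1 - th 2) * y"
  have key: "\<And>a. a \<le> d \<Longrightarrow> (Y *\<^sub>v r) $ a - th 2 * r $ a = XX + ZZ * w $ a"
  proof -
    fix a assume a: "a \<le> d"
    have "(Y *\<^sub>v r) $ a - th 2 * r $ a = th 0 * r0 $ a + th 1 * r1 $ a + th 2 * r2 $ a - th 2 * (r0 $ a + r1 $ a + r2 $ a)"
      using Yrv rsplit a by simp
    also have "\<dots> = (th 0 - th 2) * r0 $ a + (th 1 - th 2) * r1 $ a" by (simp add: algebra_simps)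
    also have "\<dots> = XX + ZZ * w $ a" using r0v r1v a unfolding XX_def ZZ_def one_def by simp
    finally show "(Y *\<^sub>v r) $ a - th 2 * r $ a = XX + ZZ * w $ a" .
  qed
  have wsh: "\<And>a. a \<le> d \<Longrightarrow> ths a = w $ a + \<beta>" using wv by simp
  have rw: "\<And>a. a \<le> d \<Longrightarrow> r $ a = (w $ a + \<beta>) * w $ a" using rent wsh by simp
  have Y01: "Y $$ (0,1) = th 0" using rowsum[of 0] d3 by simp
  have Ydd: "Y $$ (d,d-1) = th 0" using rowsum[of d] d3 by simp
  have th0nz: "th 0 \<noteq> 0" using nzu d3 Y01 by force
  have rowm: "\<And>z i. z \<in> carrier_vec ?n \<Longrightarrow> 1 \<le> i \<Longrightarrow> i \<le> d - 1 \<Longrightarrow>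
      (Y *\<^sub>v z) $ i = Y $$ (i,i-1) * z $ (i-1) + Y $$ (i,i+1) * z $ (i+1)"
  proof -
    fix z :: "'a vec" and i assume z: "z \<in> carrier_vec ?n" and i1: "1 \<le> i" and i2: "i \<le> d - 1"
    show "(Y *\<^sub>v z) $ i = Y $$ (i,i-1) * z $ (i-1) + Y $$ (i,i+1) * z $ (i+1)"
      using tri_row[OF Yc tri z, of i] i1 i2 d3 by simp
  qed
  have row0: "\<And>z. z \<in> carrier_vec ?n \<Longrightarrow> (Y *\<^sub>v z) $ 0 = th 0 * z $ 1"
    using tri_row[OF Yc tri, of _ 0] d3 Y01 by simp
  have rowd: "\<And>z. z \<in> carrier_vec ?n \<Longrightarrow> (Y *\<^sub>v z) $ d = th 0 * z $ (d-1)"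
    using tri_row[OF Yc tri, of _ d] d3 Ydd by simp
  have Ywe: "\<And>a. a \<le> d \<Longrightarrow> (Y *\<^sub>v w) $ a = th 1 * w $ a" using Yw wc by simp
  have h3: "th 0 * w $ 1 = th 1 * w $ 0" using row0[OF wc] Ywe[of 0] by simp
  have h4: "th 0 * w $ (d-1) = th 1 * w $ d" using rowd[OF wc] Ywe[of d] by simp
  have h6: "th 0 * ((w $ 1 + \<beta>) * w $ 1) - th 2 * ((w $ 0 + \<beta>) * w $ 0) = XX + ZZ * w $ 0"
    using key[of 0] row0[OF rc] rw[of 0] rw[of 1] d3 by simp
  have h7: "th 0 * ((w $ (d-1) + \<beta>) * w $ (d-1)) - th 2 * ((w $ d + \<beta>) * w $ d) = XX + ZZ * w $ d"
    using key[of d] rowd[OF rc] rw[of d] rw[of "d-1"] by simp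
  have nd: "w $ d \<noteq> w $ 0" using wv[of d] wv[of 0] ths_dist d3 by force
  show ?thesis
  proof (intro allI impI)
    fix i assume i: "1 \<le> i \<and> i \<le> d - 1"
    then have i1: "1 \<le> i" and i2: "i \<le> d - 1" by auto
    have id: "i \<le> d" "0 < i" "i < d" using i1 i2 d3 by auto
    have h1: "Y $$ (i,i-1) + Y $$ (i,i+1) = th 0" using rowsum[OF id(1)] id(2,3) by simp
    have h2: "Y $$ (i,i-1) * w $ (i-1) + Y $$ (i,i+1) * w $ (i+1) = th 1 * w $ i"
      using rowm[OF wc i1 i2] Ywe[of i] i2 d3 by simp
    have h5: "Y $$ (i,i-1) * ((w $ (i-1) + \<beta>) * w $ (i-1)) + Y $$ (i,i+1) * ((w $ (i+1) + \<beta>) * w $ (i+1))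
        - th 2 * ((w $ i + \<beta>) * w $ i) = XX + ZZ * w $ i"
      using rowm[OF rc i1 i2] key[of i] rw[of i] rw[of "i-1"] rw[of "i+1"] i2 d3 by simp
    note fa = final_alg2[OF h1 h2 h3 h4 h5 h6 h7 th0nz nd]
    have s: "ths (i+1) = w $ (i+1) + \<beta>" "ths (i-1) = w $ (i-1) + \<beta>" "ths i = w $ i + \<beta>"
      "ths 0 = w $ 0 + \<beta>" "ths 1 = w $ 1 + \<beta>" "ths d = w $ d + \<beta>" "ths (d-1) = w $ (d-1) + \<beta>"
      using wsh i2 d3 by auto
    show "th 0 * (ths (i+1) - ths 1) * (ths (i-1) - ths 1)
      + th 1 * (ths i - ths 0) * (ths (d-1) - ths (i+1) - ths (i-1) + ths 1)
      - th 2 * (ths i - ths 0) * (ths d - ths i) = 0"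
      unfolding s using fa .
  qed
qed

end
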